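(* Let $\mathcal G=(\mathcal V,\mathcal E,W)$ be a network, $h\in\mathbb{R}^{\mathcal V}$, and consider the SNC game with binary actions on $\mathcal G$ with external field $h$. Let $\mathcal V=\mathcal R\cup\mathcal S$ with $\mathcal R\cap\mathcal S=\emptyset$ be a binary partition such that the subnetwork $\mathcal G_{\mathcal R}$ is structurally balanced, and let $\tau\in\{\pm1\}^{\mathcal R}$ be such that $$\tau_iW_{ij}\tau_j\ge 0\qquad\forall i,j\in\mathcal R.$$ If $$w_i^{\mathcal R}+\tau_ih_i\ge w_i^{\mathcal S}\qquad\forall i\in\mathcal R,$$ and $\mathcal N_{\mathcal S}^{(\tau)}\neq\emptyset$, then there exists a Nash equilibrium $x^*\in\mathcal N$ of the SNC game such that $x^*_{\mathcal R}=\tau$.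
   Context: A network is a triple $\mathcal G=(\mathcal V,\mathcal E,W)$ where $\mathcal V$ is a finite nonempty set, $\mathcal E\subseteq\mathcal V\times\mathcal V$, and $W\in\mathbb{R}^{\mathcal V\times\mathcal V}$ has zero diagonal and satisfies $W_{ij}\neq0$ iff $(i,j)\in\mathcal E$ (weights may have either sign; $W$ need not be symmetric). For $\mathcal U\subseteq\mathcal V$, the subnetwork $\mathcal G_{\mathcal U}$ has node set $\mathcal U$, links $\mathcal E\cap(\mathcal U\times\mathcal U)$ and weight matrix $W_{\mathcal U\mathcal U}$ (restriction of $W$). A network is structurally balanced if its node set can be written as a disjoint union $\mathcal V_1\cup\mathcal V_2$ with $W_{ij}\ge0$ whenever $i,j$ lie in the same part and $W_{ij}\le0$ whenever $i,j$ lie in different parts. For $i\in\mathcal V$ and $\mathcal B\subseteq\mathcal V$, $w_i^{\mathcal B}=\sum_{j\in\mathcal B}|W_{ij}|$. The SNC (signed network coordination) game with binary actions on $\mathcal G$ with external field $h\in\mathbb{R}^{\mathcal V}$ has player set $\mathcal V$, each player having action set $\{-1,+1\}$, strategy profile set $\mathcal X=\{\pm1\}^{\mathcal V}$, and utility $u_i(x)=h_ix_i+x_i\sum_{j\in\mathcal V}W_{ij}x_j$ for $i\in\mathcal V$. The best response of player $i$ is $\mathcal B_i(x_{-i})=\arg\max_{x_i\in\{\pm1\}}u_i(x_i,x_{-i})$, where $x_{-i}$ is the profile of the other players; a (pure) Nash equilibrium is $x^*$ with $x^*_i\in\mathcal B_i(x^*_{-i})$ for all $i$; $\mathcal N$ denotes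 the set of Nash equilibria. For a binary partition $\mathcal V=\mathcal R\cup\mathcal S$ and $y\in\{\pm1\}^{\mathcal R}$, the $\mathcal S$-restricted game with strategy profile of players in $\mathcal R$ frozen to $y$ is the game with player set $\mathcal S$, actions $\{\pm1\}$, and utilities $u_i^{(y)}(z)=u_i(y,z)=z_i\sum_{j\in\mathcal S}W_{ij}z_j+z_i\sum_{j\in\mathcal R}W_{ij}y_j+z_ih_i$ for $i\in\mathcal S$, $z\in\{\pm1\}^{\mathcal S}$; $\mathcal N_{\mathcal S}^{(y)}$ denotes its set of Nash equilibria. *)

theory Defs
  imports "HOL-Analysis.Analysis"
begin

text \<open>W is a function on node pairs; it is required to vanish
  outside V x V (it only matters on V x V).\<close>
definition network :: "'a set \<Rightarrow> ('a \<times> 'a) set \<Rightarrow> ('a \<Rightarrow> 'a \<Rightarrow> real) \<Rightarrow> bool" where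
  "network V E W \<longleftrightarrow> finite V \<and> V \<noteq> {} \<and> E \<subseteq> V \<times> V \<and>
     (\<forall>i\<in>V. W i i = 0) \<and> (\<forall>i\<in>V. \<forall>j\<in>V. W i j \<noteq> 0 \<longleftrightarrow> (i, j) \<in> E) \<and>
     (\<forall>i j. (i \<notin> V \<or> j \<notin> V) \<longrightarrow> W i j = 0)"

definition structurally_balanced :: "'a set \<Rightarrow> ('a \<Rightarrow> 'a \<Rightarrow> real) \<Rightarrow> bool" where
  "structurally_balanced U W \<longleftrightarrow> (\<exists>U1 U2. U1 \<inter> U2 = {} \<and> U1 \<union> U2 = U \<and>
     (\<forall>i\<in>U. \<forall>j\<in>U. ((i \<in> U1 \<longleftrightarrow> j \<in> U1) \<longrightarrow> W i j \<ge> 0) \<and>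
                     ((i \<in> U1 \<longleftrightarrow> j \<in> U2) \<longrightarrow> W i j \<le> 0)))"

definition wsum :: "('a \<Rightarrow> 'a \<Rightarrow> real) \<Rightarrow> 'a \<Rightarrow> 'a set \<Rightarrow> real" where
  "wsum W i B = (\<Sum>j\<in>B. \<bar>W i j\<bar>)"

definition profile :: "'a set \<Rightarrow> ('a \<Rightarrow> real) \<Rightarrow> bool" where
  "profile A x \<longleftrightarrow> (\<forall>i\<in>A. x i = 1 \<or> x i = -1)"

definition utility :: "'a set \<Rightarrow> ('a \<Rightarrow> 'a \<Rightarrow> real) \<Rightarrow> ('a \<Rightarrow> real) \<Rightarrow> 'a \<Rightarrow> ('a \<Rightarrow> real) \<Rightarrow> real" where
  "utility V W h i x = h i * x i + x i * (\<Sum>j\<in>V. W i j * x j)"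

definition best_response :: "'a set \<Rightarrow> ('a \<Rightarrow> 'a \<Rightarrow> real) \<Rightarrow> ('a \<Rightarrow> real) \<Rightarrow> 'a \<Rightarrow> ('a \<Rightarrow> real) \<Rightarrow> real set" where
  "best_response V W h i x = {a \<in> {-1, 1}. \<forall>b \<in> {-1, 1}.
      utility V W h i (x(i := b)) \<le> utility V W h i (x(i := a))}"

definition nash :: "'a set \<Rightarrow> ('a \<Rightarrow> 'a \<Rightarrow> real) \<Rightarrow> ('a \<Rightarrow> real) \<Rightarrow> ('a \<Rightarrow> real) \<Rightarrow> bool" where
  "nash V W h x \<longleftrightarrow> profile V x \<and> (\<forall>i\<in>V. x i \<in> best_response V W h i x)"

definition join :: "'a set \<Rightarrow> ('a \<Rightarrow> real) \<Rightarrow> ('a \<Rightarrow> real) \<Rightarrow> ('a \<Rightarrow> real)" where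
  "join R y z = (\<lambda>j. if j \<in> R then y j else z j)"

definition restricted_nash :: "'a set \<Rightarrow> ('a \<Rightarrow> 'a \<Rightarrow> real) \<Rightarrow> ('a \<Rightarrow> real) \<Rightarrow> 'a set \<Rightarrow> 'a set
    \<Rightarrow> ('a \<Rightarrow> real) \<Rightarrow> ('a \<Rightarrow> real) \<Rightarrow> bool" where
  "restricted_nash V W h R S y z \<longleftrightarrow> profile S z \<and>
     (\<forall>i\<in>S. \<forall>b \<in> {-1, 1}.
        utility V W h i (join R y (z(i := b))) \<le> utility V W h i (join R y z))"

end

theory Submission
  imports Defs
begin

lemma util_upd:
  assumes "W i i = 0"
  shows "utility V W h i (x(i := b)) = b * (h i + (\<Sum>j\<in>V. W i j * x j))"
proof -
  have "(\<Sum>j\<in>V. W i j * (x(i := b)) j) = (\<Sum>j\<in>V. W i j * x j)"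
    by (rule sum.cong) (auto simp: assms)
  then show ?thesis by (simp add: utility_def algebra_simps)
qed

theorem theorem1:
  fixes V R S :: "'a set" and E :: "('a \<times> 'a) set"
    and W :: "'a \<Rightarrow> 'a \<Rightarrow> real" and h \<tau> :: "'a \<Rightarrow> real"
  assumes net: "network V E W"
    and part: "R \<union> S = V" "R \<inter> S = {}"
    and bal: "structurally_balanced R W"
    and tau: "profile R \<tau>"
    and tauW: "\<forall>i\<in>R. \<forall>j\<in>R. \<tau> i * W i j * \<tau> j \<ge> 0"
    and cond: "\<forall>i\<in>R. wsum W i R + \<tau> i * h i \<ge> wsum W i S"
    and ne: "\<exists>z. restricted_nash V W h R S \<tau> z"
  shows "\<exists>x. nash V W h x \<and> (\<forall>i\<in>R. x i = \<tau> i)"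
proof -
  obtain z where z: "restricted_nash V W h R S \<tau> z" using ne by blast
  define x where "x = join R \<tau> z"
  have finV: "finite V" and Wii: "\<And>i. W i i = 0" using net unfolding network_def by metis+
  have finR: "finite R" and finS: "finite S" using finV part by auto
  have zp: "profile S z" and zn: "\<forall>i\<in>S. \<forall>b \<in> {-1, 1}.
        utility V W h i (join R \<tau> (z(i := b))) \<le> utility V W h i (join R \<tau> z)"
    using z unfolding restricted_nash_def by auto
  have prof: "profile V x" using zp tau part unfolding profile_def x_def join_def by auto
  have br: "x i \<in> best_response V W h i x" if iV: "i \<in> V" for i
  proof (cases "i \<in> S")
    case True
    then have iR: "i \<notin> R" using part by auto
    have eq: "join R \<tau> (z(i := b)) = x(i := b)" for b
      unfolding x_def join_def using iR by auto
    have xx: "join R \<tau> z = x" unfolding x_def by simp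
    have "x i \<in> {-1, 1}" using prof iV unfolding profile_def by auto
    moreover have "\<forall>b\<in>{-1, 1}. utility V W h i (x(i := b)) \<le> utility V W h i x"
      using zn True eq xx by metis
    ultimately show ?thesis unfolding best_response_def by simp
  next
    case False
    then have iR: "i \<in> R" using part iV by auto
    have ti: "\<tau> i = 1 \<or> \<tau> i = -1" using tau iR unfolding profile_def by auto
    have xi: "x i = \<tau> i" using iR unfolding x_def join_def by auto
    define c where "c = h i + (\<Sum>j\<in>V. W i j * x j)"
    have sumsplit: "(\<Sum>j\<in>V. W i j * x j) = (\<Sum>j\<in>R. W i j * \<tau> j) + (\<Sum>j\<in>S. W i j * z j)"
    proof -
      have "(\<Sum>j\<in>V. W i j * x j) = (\<Sum>j\<in>R. W i j * x j) + (\<Sum>j\<in>S. W i j * x j)"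
        using part finR finS by (metis sum.union_disjoint)
      moreover have "(\<Sum>j\<in>R. W i j * x j) = (\<Sum>j\<in>R. W i j * \<tau> j)"
        by (rule sum.cong) (auto simp: x_def join_def)
      moreover have "(\<Sum>j\<in>S. W i j * x j) = (\<Sum>j\<in>S. W i j * z j)"
        using part by (intro sum.cong) (auto simp: x_def join_def)
      ultimately show ?thesis by simp
    qed
    have r1: "\<tau> i * (\<Sum>j\<in>R. W i j * \<tau> j) = wsum W i R"
      unfolding wsum_def sum_distrib_left
    proof (rule sum.cong)
      fix j assume j: "j \<in> R"
      have tj: "\<tau> j = 1 \<or> \<tau> j = -1" using tau j unfolding profile_def by auto
      have "\<tau> i * W i j * \<tau> j \<ge> 0" using tauW iR j by auto
      then show "\<tau> i * (W i j * \<tau> j) = \<bar>W i j\<bar>" using ti tj by (auto simp: abs_if)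
    qed simp
    have r2: "\<tau> i * (\<Sum>j\<in>S. W i j * z j) \<ge> - wsum W i S"
      unfolding wsum_def sum_distrib_left sum_negf[symmetric]
    proof (rule sum_mono)
      fix j assume j: "j \<in> S"
      have tj: "z j = 1 \<or> z j = -1" using zp j unfolding profile_def by auto
      show "- \<bar>W i j\<bar> \<le> \<tau> i * (W i j * z j)" using ti tj by (auto simp: abs_if)
    qed
    have pos: "\<tau> i * c \<ge> 0"
    proof -
      have "wsum W i R + \<tau> i * h i \<ge> wsum W i S" using cond iR by blast
      moreover have "\<tau> i * c = \<tau> i * h i + \<tau> i * (\<Sum>j\<in>R. W i j * \<tau> j) + \<tau> i * (\<Sum>j\<in>S. W i j * z j)"
        unfolding c_def sumsplit by (simp add: algebra_simps)
      ultimately show ?thesis using r1 r2 by linarith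
    qed
    have "\<forall>b \<in> {-1, 1}. b * c \<le> \<tau> i * c" using pos ti by auto
    then show ?thesis unfolding best_response_def util_upd[of W i, OF Wii] c_def[symmetric] xi
      using ti by auto
  qed
  show ?thesis
    by (rule exI[of _ x]) (use prof br in \<open>auto simp: nash_def x_def join_def\<close>)
qed

end
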